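(* Let $G=(V,E)$ be a graph of maximum degree $\Delta$ and let $\mathscr{S}$ be any block system for $G$. Then $\mu^+(\mathscr{S})\le\Delta$. If in addition $G$ is $\Delta$-regular, then $\frac{\Delta}{2}\le\mu^+(\mathscr{S})\le\Delta$.
   Context: Potts configurations on $G$: $\sigma\in\Omega=[q]^V$, $q$ a positive integer. A block system for $G$ is a collection $\mathscr{S}$ of subsets of $V$ whose union is $V$. For $S\subseteq V$, $\partial S$ is the set of vertices of $V\setminus S$ with a neighbour in $S$. For $X\in\Omega$ and $c\in[q]^S$, $X^{(S,c)}$ equals $c$ on $S$ and $X$ off $S$; $\mu_{X,S}(c)$ is the number of monochromatic edges (edges with both endpoints the same colour) of $X^{(S,c)}$ incident with at least one vertex of $S$. A colour used by $c$ is free with respect to $X,S$ if it does not occur among $\{X(u):u\in\partial S\}$; $f(X,S,c)$ is the number of free colours used by $c$. $\mu^+_{X,S,f}=\max\{\mu_{X,S}(c)/(|S|-f): c\in[q]^S,\ f(X,S,c)=f\}$ (empty maximum $=0$), and $\mu^+(\mathscr{S})=\max_{S\in\mathscr{S}}\max_{X\in\Omega}\max_{f\in\{0,\dots,|S|-1\}}\mu^+_{X,S,f}$. *)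

theory Defs
  imports "HOL-Library.FuncSet" Complex_Main
begin

definition simple_graph :: "'a set \<Rightarrow> ('a \<Rightarrow> 'a \<Rightarrow> bool) \<Rightarrow> bool" where
  "simple_graph V E \<longleftrightarrow> finite V \<and> (\<forall>u v. E u v \<longrightarrow> u \<in> V \<and> v \<in> V)
     \<and> (\<forall>u v. E u v \<longrightarrow> E v u) \<and> (\<forall>v. \<not> E v v)"

definition degree :: "'a set \<Rightarrow> ('a \<Rightarrow> 'a \<Rightarrow> bool) \<Rightarrow> 'a \<Rightarrow> nat" where
  "degree V E v = card {u \<in> V. E v u}"

definition max_degree :: "'a set \<Rightarrow> ('a \<Rightarrow> 'a \<Rightarrow> bool) \<Rightarrow> nat" where
  "max_degree V E = Max (degree V E ` V)"

definition regular :: "'a set \<Rightarrow> ('a \<Rightarrow> 'a \<Rightarrow> bool) \<Rightarrow> nat \<Rightarrow> bool" where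
  "regular V E d \<longleftrightarrow> (\<forall>v \<in> V. degree V E v = d)"

definition configs :: "'a set \<Rightarrow> nat \<Rightarrow> ('a \<Rightarrow> nat) set" where
  "configs V q = V \<rightarrow>\<^sub>E {1..q}"

definition block_system :: "'a set \<Rightarrow> 'a set set \<Rightarrow> bool" where
  "block_system V SS \<longleftrightarrow> (\<forall>S \<in> SS. S \<subseteq> V) \<and> \<Union> SS = V"

definition boundary :: "'a set \<Rightarrow> ('a \<Rightarrow> 'a \<Rightarrow> bool) \<Rightarrow> 'a set \<Rightarrow> 'a set" where
  "boundary V E S = {v \<in> V - S. \<exists>u \<in> S. E u v}"

definition upd_conf :: "('a \<Rightarrow> nat) \<Rightarrow> 'a set \<Rightarrow> ('a \<Rightarrow> nat) \<Rightarrow> 'a \<Rightarrow> nat" where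
  "upd_conf X S c = (\<lambda>v. if v \<in> S then c v else X v)"

definition mu :: "('a \<Rightarrow> 'a \<Rightarrow> bool) \<Rightarrow> ('a \<Rightarrow> nat) \<Rightarrow> 'a set \<Rightarrow> ('a \<Rightarrow> nat) \<Rightarrow> nat" where
  "mu E X S c = card {{u, v} | u v. E u v \<and> upd_conf X S c u = upd_conf X S c v \<and> (u \<in> S \<or> v \<in> S)}"

definition free_count :: "'a set \<Rightarrow> ('a \<Rightarrow> 'a \<Rightarrow> bool) \<Rightarrow> ('a \<Rightarrow> nat) \<Rightarrow> 'a set \<Rightarrow> ('a \<Rightarrow> nat) \<Rightarrow> nat" where
  "free_count V E X S c = card (c ` S - X ` boundary V E S)"

text \<open>\<mu>^+_{X,S,f}; empty maximum is 0 (all values are nonnegative, so inserting 0 is harmless).\<close>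
definition mu_plus_XSf :: "'a set \<Rightarrow> ('a \<Rightarrow> 'a \<Rightarrow> bool) \<Rightarrow> nat \<Rightarrow> ('a \<Rightarrow> nat) \<Rightarrow> 'a set \<Rightarrow> nat \<Rightarrow> real" where
  "mu_plus_XSf V E q X S f = Max (insert 0
     {real (mu E X S c) / real (card S - f) | c. c \<in> S \<rightarrow>\<^sub>E {1..q} \<and> free_count V E X S c = f})"

definition mu_plus :: "'a set \<Rightarrow> ('a \<Rightarrow> 'a \<Rightarrow> bool) \<Rightarrow> nat \<Rightarrow> 'a set set \<Rightarrow> real" where
  "mu_plus V E q SS = Max (insert 0
     (\<Union>S \<in> SS. \<Union>X \<in> configs V q. (\<lambda>f. mu_plus_XSf V E q X S f) ` {0..<card S}))"

end

theory Submission
  imports Defs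
begin

lemma deg_le_max:
  assumes "simple_graph V E" "w \<in> V"
  shows "degree V E w \<le> max_degree V E"
  using assms unfolding max_degree_def simple_graph_def by (intro Max_ge) auto

lemma mu_finite:
  assumes "simple_graph V E"
  shows "finite {{u, v} | u v. E u v \<and> upd_conf X S c u = upd_conf X S c v \<and> (u \<in> S \<or> v \<in> S)}"
proof -
  have "{{u, v} | u v. E u v \<and> upd_conf X S c u = upd_conf X S c v \<and> (u \<in> S \<or> v \<in> S)}
        \<subseteq> (\<lambda>(u,v). {u,v}) ` (V \<times> V)"
    using assms unfolding simple_graph_def by auto
  moreover have "finite V" using assms unfolding simple_graph_def by auto
  ultimately show ?thesis by (meson finite_SigmaI finite_imageI finite_subset)
qed

lemma mu_upper:
  assumes sg: "simple_graph V E" and SV: "S \<subseteq> V"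
  shows "mu E X S c \<le> max_degree V E * (card S - free_count V E X S c)"
proof -
  define Y where "Y = upd_conf X S c"
  define M where "M = {{u, v} | u v. E u v \<and> Y u = Y v \<and> (u \<in> S \<or> v \<in> S)}"
  define F where "F = c ` S - X ` boundary V E S"
  define R where "R = inv_into S c ` F"
  have finV: "finite V" using sg unfolding simple_graph_def by auto
  have finS: "finite S" using SV finV finite_subset by auto
  have FS: "F \<subseteq> c ` S" unfolding F_def by auto
  have RS: "R \<subseteq> S" unfolding R_def using FS by (auto intro: inv_into_into)
  have cardR: "card R = card F" unfolding R_def
    by (rule card_image) (rule inj_on_inv_into[OF FS])
  have Rprop: "c r \<in> F \<and> r = inv_into S c (c r)" if "r \<in> R" for r
  proof -
    note rR = that
    obtain k where k: "k \<in> F" "r = inv_into S c k" using rR R_def by auto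
    have "k \<in> c ` S" using k(1) FS by blast
    then have "c r = k" unfolding k(2) by (rule f_inv_into_f)
    then show ?thesis using k by simp
  qed
  have Eedge: "u \<in> V \<and> v \<in> V \<and> E v u \<and> u \<noteq> v" if "E u v" for u v
    using sg that unfolding simple_graph_def by metis
  have bad: False if "E u v" "Y u = Y v" "u \<in> R" "v \<notin> S - R" for u v
  proof (cases "v \<in> S")
    case True
    then have "v \<in> R" using that by auto
    have "u \<in> S" "v \<in> S" using RS that True by auto
    then have "c u = c v" using that unfolding Y_def upd_conf_def by auto
    then have "u = v" using Rprop[OF \<open>u \<in> R\<close>] Rprop[OF \<open>v \<in> R\<close>] by metis
    then show False using Eedge[OF that(1)] by simp
  next
    case False
    have "u \<in> S" using RS that by auto
    then have vb: "v \<in> boundary V E S" unfolding boundary_def using False Eedge[OF that(1)] that(1) by auto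
    have "c u = X v" using that \<open>u \<in> S\<close> False unfolding Y_def upd_conf_def by auto
    then show False using Rprop[OF that(3)] vb unfolding F_def by auto
  qed
  have key: "M \<subseteq> (\<Union>w\<in>S-R. (\<lambda>v. {w,v}) ` {v\<in>V. E w v})"
  proof
    fix e assume "e \<in> M"
    then obtain u v where e: "e = {u,v}" "E u v" "Y u = Y v" "u \<in> S \<or> v \<in> S"
      unfolding M_def by auto
    have "u \<in> S - R \<or> v \<in> S - R"
    proof (rule ccontr)
      assume nn: "\<not> (u \<in> S - R \<or> v \<in> S - R)"
      show False
      proof (cases "u \<in> S")
        case True
        then have "u \<in> R" using nn by auto
        then show False using bad[OF e(2) e(3)] nn by auto
      next
        case False
        then have "v \<in> R" using nn e(4) by auto
        then show False using bad[of v u] Eedge[OF e(2)] e(3) nn by auto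
      qed
    qed
    then show "e \<in> (\<Union>w\<in>S-R. (\<lambda>v. {w,v}) ` {v\<in>V. E w v})"
      using e Eedge[OF e(2)] by (auto simp: insert_commute)
  qed
  have "card M \<le> card (\<Union>w\<in>S-R. (\<lambda>v. {w,v}) ` {v\<in>V. E w v})"
    by (rule card_mono[OF _ key]) (use finS finV in auto)
  also have "\<dots> \<le> (\<Sum>w\<in>S-R. card ((\<lambda>v. {w,v}) ` {v\<in>V. E w v}))"
    by (rule card_UN_le) (use finS in auto)
  also have "\<dots> \<le> (\<Sum>w\<in>S-R. max_degree V E)"
  proof (rule sum_mono)
    fix w assume "w \<in> S - R"
    have "card ((\<lambda>v. {w,v}) ` {v\<in>V. E w v}) \<le> card {v\<in>V. E w v}"
      by (rule card_image_le) (use finV in auto)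
    also have "\<dots> \<le> max_degree V E" using deg_le_max[OF sg, of w] \<open>w \<in> S - R\<close> SV
      unfolding degree_def by auto
    finally show "card ((\<lambda>v. {w,v}) ` {v\<in>V. E w v}) \<le> max_degree V E" .
  qed
  also have "\<dots> = max_degree V E * (card S - card R)"
    using card_Diff_subset[OF finite_subset[OF RS finS] RS] by simp
  finally show ?thesis
    unfolding mu_def free_count_def M_def Y_def F_def cardR[unfolded F_def] by simp
qed

lemma mu_lower:
  assumes sg: "simple_graph V E" and reg: "regular V E D" and SV: "S \<subseteq> V"
    and X1: "\<forall>v\<in>V. X v = 1" and c1: "\<forall>v\<in>S. c v = 1"
  shows "D * card S \<le> 2 * mu E X S c"
proof -
  define M where "M = {{u, v} | u v. E u v \<and> upd_conf X S c u = upd_conf X S c v \<and> (u \<in> S \<or> v \<in> S)}"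
  define P where "P = Sigma S (\<lambda>w. {v\<in>V. E w v})"
  have finV: "finite V" using sg unfolding simple_graph_def by auto
  have finS: "finite S" using SV finV finite_subset by auto
  have Eedge: "u \<in> V \<and> v \<in> V \<and> E v u \<and> u \<noteq> v" if "E u v" for u v
    using sg that unfolding simple_graph_def by metis
  have Y1: "upd_conf X S c u = 1" if "u \<in> V" for u
    using that X1 c1 unfolding upd_conf_def by auto
  have finM: "finite M" unfolding M_def by (rule mu_finite[OF sg])
  have "card P = (\<Sum>w\<in>S. card {v\<in>V. E w v})"
    unfolding P_def by (rule card_SigmaI) (use finS finV in auto)
  also have "\<dots> = (\<Sum>w\<in>S. D)"
    using reg SV unfolding regular_def degree_def by (intro sum.cong) auto
  finally have cP: "card P = D * card S" by simp
  have sub: "P \<subseteq> (\<Union>e\<in>M. {p\<in>P. {fst p, snd p} = e})"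
  proof
    fix p assume "p \<in> P"
    then obtain w v where p: "p = (w,v)" "w \<in> S" "E w v" unfolding P_def by auto
    have "upd_conf X S c w = upd_conf X S c v" using Y1 Eedge[OF p(3)] by simp
    then have "{w,v} \<in> M" unfolding M_def using p(2,3) by blast
    then show "p \<in> (\<Union>e\<in>M. {p\<in>P. {fst p, snd p} = e})" using \<open>p \<in> P\<close> p by auto
  qed
  have "card P \<le> card (\<Union>e\<in>M. {p\<in>P. {fst p, snd p} = e})"
    by (rule card_mono[OF _ sub]) (use finM finS finV in \<open>auto simp: P_def\<close>)
  also have "\<dots> \<le> (\<Sum>e\<in>M. card {p\<in>P. {fst p, snd p} = e})"
    by (rule card_UN_le[OF finM])
  also have "\<dots> \<le> (\<Sum>e\<in>M. 2)"
  proof (rule sum_mono)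
    fix e assume "e \<in> M"
    then obtain a b where e: "e = {a,b}" unfolding M_def by blast
    have "{p\<in>P. {fst p, snd p} = e} \<subseteq> {(a,b),(b,a)}"
    proof
      fix p assume "p \<in> {p\<in>P. {fst p, snd p} = e}"
      then have "{fst p, snd p} = {a,b}" using e by simp
      then have "(fst p = a \<and> snd p = b) \<or> (fst p = b \<and> snd p = a)"
        by (metis doubleton_eq_iff)
      then show "p \<in> {(a,b),(b,a)}" by (cases p) auto
    qed
    then have "card {p\<in>P. {fst p, snd p} = e} \<le> card {(a,b),(b,a)}"
      by (rule card_mono[rotated]) simp
    also have "\<dots> \<le> 2" by (rule card_insert_le_m1) simp_all
    finally show "card {p\<in>P. {fst p, snd p} = e} \<le> 2" .
  qed
  finally show ?thesis using cP unfolding mu_def M_def by simp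
qed


lemma XSf_finite:
  assumes "finite S"
  shows "finite {real (mu E X S c) / real (card S - f) | c. c \<in> S \<rightarrow>\<^sub>E {1..q} \<and> free_count V E X S c = f}"
proof -
  have "{real (mu E X S c) / real (card S - f) | c. c \<in> S \<rightarrow>\<^sub>E {1..q} \<and> free_count V E X S c = f}
     \<subseteq> (\<lambda>c. real (mu E X S c) / real (card S - f)) ` (S \<rightarrow>\<^sub>E {1..q})" by blast
  moreover have "finite (S \<rightarrow>\<^sub>E {1..q})" using assms by (intro finite_PiE) auto
  ultimately show ?thesis using finite_subset by blast
qed

lemma XSf_upper:
  assumes sg: "simple_graph V E" and SV: "S \<subseteq> V" and f: "f < card S"
  shows "mu_plus_XSf V E q X S f \<le> real (max_degree V E)"
proof -
  have finS: "finite S" using sg SV finite_subset unfolding simple_graph_def by blast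
  show ?thesis unfolding mu_plus_XSf_def
  proof (subst Max_le_iff)
    show "finite (insert 0 {real (mu E X S c) / real (card S - f) | c. c \<in> S \<rightarrow>\<^sub>E {1..q} \<and> free_count V E X S c = f})"
      using XSf_finite[OF finS] by blast
    show "\<forall>a\<in>insert 0 {real (mu E X S c) / real (card S - f) | c. c \<in> S \<rightarrow>\<^sub>E {1..q} \<and> free_count V E X S c = f}.
           a \<le> real (max_degree V E)"
    proof
      fix a assume "a \<in> insert 0 {real (mu E X S c) / real (card S - f) | c. c \<in> S \<rightarrow>\<^sub>E {1..q} \<and> free_count V E X S c = f}"
      then consider "a = 0" | c where "a = real (mu E X S c) / real (card S - f)" "free_count V E X S c = f"
        by blast
      then show "a \<le> real (max_degree V E)"
      proof cases
        case 1 then show ?thesis by simp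
      next
        case 2
        have pos: "real (card S - f) > 0" using f by simp
        have "mu E X S c \<le> max_degree V E * (card S - f)"
          using mu_upper[OF sg SV, of X c] 2(2) by simp
        then have "real (mu E X S c) \<le> real (max_degree V E) * real (card S - f)"
          by (metis of_nat_le_iff of_nat_mult)
        then show ?thesis using 2(1) pos by (simp add: divide_le_eq)
      qed
    qed
  qed simp
qed

theorem proposition2p4:
  fixes V :: "'a set" and E :: "'a \<Rightarrow> 'a \<Rightarrow> bool" and q :: nat and SS :: "'a set set"
  assumes "simple_graph V E" and "V \<noteq> {}" and "q \<ge> 1"
    and "block_system V SS"
  shows "mu_plus V E q SS \<le> real (max_degree V E) \<and>
         (regular V E (max_degree V E) \<longrightarrow>
           real (max_degree V E) / 2 \<le> mu_plus V E q SS)"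
proof -
  note sg = assms(1)
  define D where "D = max_degree V E"
  define A where "A = (\<Union>S \<in> SS. \<Union>X \<in> configs V q. (\<lambda>f. mu_plus_XSf V E q X S f) ` {0..<card S})"
  have finV: "finite V" using sg unfolding simple_graph_def by auto
  have SSV: "\<And>S. S \<in> SS \<Longrightarrow> S \<subseteq> V" using assms(4) unfolding block_system_def by auto
  have finSS: "finite SS" using SSV finV by (meson Pow_iff finite_Pow_iff finite_subset subsetI)
  have finC: "finite (configs V q)" unfolding configs_def using finV by (intro finite_PiE) auto
  have finA: "finite A" unfolding A_def using finSS finC by (intro finite_UN_I) auto
  have mp: "mu_plus V E q SS = Max (insert 0 A)" unfolding mu_plus_def A_def by simp
  have part1: "mu_plus V E q SS \<le> real D"
    unfolding mp
  proof (subst Max_le_iff)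
    show "\<forall>a\<in>insert 0 A. a \<le> real D"
    proof
      fix a assume "a \<in> insert 0 A"
      then consider "a = 0" | S X f where "S \<in> SS" "f < card S" "a = mu_plus_XSf V E q X S f"
        unfolding A_def by auto
      then show "a \<le> real D"
      proof cases
        case 1 then show ?thesis by simp
      next
        case 2 then show ?thesis using XSf_upper[OF sg SSV[OF 2(1)] 2(2)] unfolding D_def by simp
      qed
    qed
  qed (use finA in auto)
  have part2: "real D / 2 \<le> mu_plus V E q SS" if reg: "regular V E D"
  proof (cases "D = 0")
    case True
    then show ?thesis unfolding mp using finA by (simp add: Max_ge)
  next
    case False
    obtain w where w: "w \<in> V" using assms(2) by auto
    then obtain S where S: "S \<in> SS" "w \<in> S" using assms(4) unfolding block_system_def by auto
    have SV: "S \<subseteq> V" using SSV[OF S(1)] .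
    have finS: "finite S" using SV finV finite_subset by auto
    define X0 :: "'a \<Rightarrow> nat" where "X0 = (\<lambda>v\<in>V. 1)"
    define c0 :: "'a \<Rightarrow> nat" where "c0 = (\<lambda>v\<in>S. 1)"
    define f0 where "f0 = free_count V E X0 S c0"
    have X0c: "X0 \<in> configs V q" unfolding X0_def configs_def using assms(3) by auto
    have c0c: "c0 \<in> S \<rightarrow>\<^sub>E {1..q}" unfolding c0_def using assms(3) by auto
    have cS: "c0 ` S = {1}" unfolding c0_def using S(2) by auto
    have bV: "boundary V E S \<subseteq> V" unfolding boundary_def by auto
    have f0le: "f0 \<le> 1"
    proof -
      have "f0 \<le> card (c0 ` S)" unfolding f0_def free_count_def
        by (rule card_mono) (use cS in auto)
      then show ?thesis using cS by simp
    qed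
    have f0lt: "f0 < card S"
    proof (cases "boundary V E S = {}")
      case False
      then obtain b where "b \<in> boundary V E S" by auto
      then have "1 \<in> X0 ` boundary V E S" using bV unfolding X0_def by force
      then have "c0 ` S - X0 ` boundary V E S = {}" using cS by auto
      then have "f0 = 0" unfolding f0_def free_count_def by (simp only: card.empty)
      then show ?thesis using finS S(2) card_gt_0_iff by auto
    next
      case True
      have "degree V E w = D" using reg w unfolding regular_def by auto
      then have "card {u \<in> V. E w u} > 0" using False unfolding degree_def by simp
      then obtain u where u: "u \<in> V" "E w u" by (metis (no_types, lifting) card.empty empty_Collect_eq less_irrefl)
      have "u \<in> S" using True u S(2) unfolding boundary_def by blast
      moreover have "u \<noteq> w" using sg u unfolding simple_graph_def by metis
      ultimately have "{w,u} \<subseteq> S" using S(2) by auto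
      then have "card {w,u} \<le> card S" using finS card_mono by blast
      then have "2 \<le> card S" using \<open>u \<noteq> w\<close> by simp
      then show ?thesis using f0le by simp
    qed
    have low: "D * card S \<le> 2 * mu E X0 S c0"
      by (rule mu_lower[OF sg reg SV]) (auto simp: X0_def c0_def)
    define r0 where "r0 = real (mu E X0 S c0) / real (card S - f0)"
    have pos: "real (card S - f0) > 0" using f0lt by simp
    have "real D * real (card S - f0) \<le> real D * real (card S)"
      by (intro mult_left_mono) auto
    also have "\<dots> \<le> 2 * real (mu E X0 S c0)" using low by (metis of_nat_le_iff of_nat_mult of_nat_numeral)
    finally have r0ge: "real D / 2 \<le> r0" unfolding r0_def using pos by (simp add: field_simps)
    have r0in: "r0 \<le> mu_plus_XSf V E q X0 S f0"
      unfolding mu_plus_XSf_def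
      by (rule Max_ge) (use XSf_finite[OF finS] c0c f0_def r0_def in auto)
    have inA: "mu_plus_XSf V E q X0 S f0 \<in> A" unfolding A_def using S(1) X0c f0lt by (intro UN_I[OF S(1)] UN_I[OF X0c] imageI) auto
    have "mu_plus_XSf V E q X0 S f0 \<le> Max (insert 0 A)" using finA inA by (simp add: Max_ge)
    then show ?thesis unfolding mp using r0ge r0in by linarith
  qed
  show ?thesis using part1 part2 unfolding D_def by blast
qed

end
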